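(* Let $\mathcal{C}$ be a symmetric monoidal category with discarding $\top$, completely mixed states $\mu$ and zero morphisms, satisfying normalisation, the sharpness axiom and the pure composition axiom, and suppose that for every object $A$, $\top_A$ is the unique effect $e$ on $A$ with $e\circ\psi=1_I$ for every causal pure state $\psi$ of $A$. Then the pre-duals axiom holds if and only if for every object $A$ the state $\mu_A$ has a purification $\omega$, a pure state of $A\otimes B$ for some object $B$, which also purifies $\mu_B$, i.e. $(1_A\otimes\top_B)\circ\omega=\mu_A$ and $(\top_A\otimes 1_B)\circ\omega=\mu_B$.
   Context: States: morphisms $I\to A$; effects: $A\to I$; scalars $I\to I$; unitors and associators suppressed. Discarding: effects $\top_A$ with $\top_{A\otimes B}=\top_A\otimes\top_B$, $\top_I=1_I$. Completely mixed states: states $\mu_A$ with $\mu_{A\otimes B}=\mu_A\otimes\mu_B$, $\mu_I=1_I$. Causal: $\top_B\circ f=\top_A$; co-causal: $f\circ\mu_A=\mu_B$. Zero morphisms: absorbing morphisms $0\colon A\to B$. Normalisation: every non-zero state $\rho$ is $\sigma\otimes r$ for a scalar $r$ and a unique causal state $\sigma$ (its normalisation). Pure: $f\colon A\to B$ is pure if $f=0$ or whenever $(1_B\otimes\top_C)\circ g=f$ for $g\colon A\to B\otimes C$, then $g=f\otimes\rho$ for some causal state $\rho$. A purification of a state $\rho$ of $A$ is a pure state $\psi$ of $A\otimes B$ with $(1_A\otimes\top_B)\circ\psi=\rho$. Sharpness axiom: for every causal pure state $\psi$ there is a unique pure co-causal effect $\overline{\psi}$ with $\overline{\psi}\circ\psi=1_I$,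 and $\psi$ is the unique causal pure state with this property. Extended to pure states by $\overline{0}=0$ and $\overline{\psi}:=\overline{\phi}\otimes r$ for non-zero pure $\psi$ with normalisation $\phi$ and $r=\top\circ\psi$. Pure composition axiom: for all causal pure states $\psi$ of $A\otimes B$ and $\phi$ of $A$, the state $(\overline{\phi}\otimes 1_B)\circ\psi$ and effect $\overline{\psi}\circ(\phi\otimes 1_B)$ are pure and $\overline{(\overline{\phi}\otimes 1_B)\circ\psi}=\overline{\psi}\circ(\phi\otimes 1_B)$. Pre-duals axiom: each $\mu_A$ has a purification $\omega$ (pure state of $A\otimes B$) with $(\top_A\otimes 1_B)\circ\omega=\mu_B$, $\overline{\omega}\circ(\mu_A\otimes 1_B)=\top_B$ and $\overline{\omega}\circ(1_A\otimes\mu_B)=\top_A$. *)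

theory Defs
  imports Main
begin

text \<open>A strict symmetric monoidal category (unitors and associators suppressed),
  together with discarding effects, completely mixed states and zero morphisms.\<close>

record ('o, 'm) opt_cat =
  Ob :: "'o set"
  Ar :: "'m set"
  Dom :: "'m \<Rightarrow> 'o"
  Cod :: "'m \<Rightarrow> 'o"
  Cmp :: "'m \<Rightarrow> 'm \<Rightarrow> 'm"   (* Cmp g f = g \<circ> f *)
  Idm :: "'o \<Rightarrow> 'm"
  TensO :: "'o \<Rightarrow> 'o \<Rightarrow> 'o"
  TensM :: "'m \<Rightarrow> 'm \<Rightarrow> 'm"
  UnitO :: "'o"
  Swap :: "'o \<Rightarrow> 'o \<Rightarrow> 'm"
  Disc :: "'o \<Rightarrow> 'm"
  Mix :: "'o \<Rightarrow> 'm"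
  Zero :: "'o \<Rightarrow> 'o \<Rightarrow> 'm"

definition hom :: "('o,'m) opt_cat \<Rightarrow> 'o \<Rightarrow> 'o \<Rightarrow> 'm set" where
  "hom C A B = {f \<in> Ar C. Dom C f = A \<and> Cod C f = B}"

definition strict_smc :: "('o,'m) opt_cat \<Rightarrow> bool" where
  "strict_smc C \<longleftrightarrow>
    (\<forall>f \<in> Ar C. Dom C f \<in> Ob C \<and> Cod C f \<in> Ob C) \<and>
    (\<forall>A \<in> Ob C. Idm C A \<in> hom C A A) \<and>
    (\<forall>A B D f g. f \<in> hom C A B \<longrightarrow> g \<in> hom C B D \<longrightarrow> Cmp C g f \<in> hom C A D) \<and>
    (\<forall>A B f. f \<in> hom C A B \<longrightarrow> Cmp C f (Idm C A) = f \<and> Cmp C (Idm C B) f = f) \<and>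
    (\<forall>A B D E f g h. f \<in> hom C A B \<longrightarrow> g \<in> hom C B D \<longrightarrow> h \<in> hom C D E \<longrightarrow>
        Cmp C h (Cmp C g f) = Cmp C (Cmp C h g) f) \<and>
    UnitO C \<in> Ob C \<and>
    (\<forall>A \<in> Ob C. \<forall>B \<in> Ob C. TensO C A B \<in> Ob C) \<and>
    (\<forall>A B D E f g. f \<in> hom C A B \<longrightarrow> g \<in> hom C D E \<longrightarrow>
        TensM C f g \<in> hom C (TensO C A D) (TensO C B E)) \<and>
    (\<forall>A B D A' B' D' f g f' g'. f \<in> hom C A B \<longrightarrow> g \<in> hom C B D \<longrightarrow>
        f' \<in> hom C A' B' \<longrightarrow> g' \<in> hom C B' D' \<longrightarrow>
        TensM C (Cmp C g f) (Cmp C g' f') = Cmp C (TensM C g g') (TensM C f f')) \<and>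
    (\<forall>A \<in> Ob C. \<forall>B \<in> Ob C. TensM C (Idm C A) (Idm C B) = Idm C (TensO C A B)) \<and>
    (\<forall>A \<in> Ob C. \<forall>B \<in> Ob C. \<forall>D \<in> Ob C.
        TensO C (TensO C A B) D = TensO C A (TensO C B D)) \<and>
    (\<forall>A \<in> Ob C. TensO C (UnitO C) A = A \<and> TensO C A (UnitO C) = A) \<and>
    (\<forall>f \<in> Ar C. \<forall>g \<in> Ar C. \<forall>h \<in> Ar C. TensM C (TensM C f g) h = TensM C f (TensM C g h)) \<and>
    (\<forall>f \<in> Ar C. TensM C (Idm C (UnitO C)) f = f \<and> TensM C f (Idm C (UnitO C)) = f) \<and>
    (\<forall>A \<in> Ob C. \<forall>B \<in> Ob C. Swap C A B \<in> hom C (TensO C A B) (TensO C B A)) \<and>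
    (\<forall>A \<in> Ob C. \<forall>B \<in> Ob C. Cmp C (Swap C B A) (Swap C A B) = Idm C (TensO C A B)) \<and>
    (\<forall>A B D E f g. f \<in> hom C A B \<longrightarrow> g \<in> hom C D E \<longrightarrow>
        Cmp C (Swap C B E) (TensM C f g) = Cmp C (TensM C g f) (Swap C A D)) \<and>
    (\<forall>A \<in> Ob C. \<forall>B \<in> Ob C. \<forall>D \<in> Ob C.
        Swap C A (TensO C B D) =
          Cmp C (TensM C (Idm C B) (Swap C A D)) (TensM C (Swap C A B) (Idm C D)))"

definition has_discarding :: "('o,'m) opt_cat \<Rightarrow> bool" where
  "has_discarding C \<longleftrightarrow>
    (\<forall>A \<in> Ob C. Disc C A \<in> hom C A (UnitO C)) \<and>
    (\<forall>A \<in> Ob C. \<forall>B \<in> Ob C. Disc C (TensO C A B) = TensM C (Disc C A) (Disc C B)) \<and>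
    Disc C (UnitO C) = Idm C (UnitO C)"

definition has_mixed :: "('o,'m) opt_cat \<Rightarrow> bool" where
  "has_mixed C \<longleftrightarrow>
    (\<forall>A \<in> Ob C. Mix C A \<in> hom C (UnitO C) A) \<and>
    (\<forall>A \<in> Ob C. \<forall>B \<in> Ob C. Mix C (TensO C A B) = TensM C (Mix C A) (Mix C B)) \<and>
    Mix C (UnitO C) = Idm C (UnitO C)"

definition has_zeros :: "('o,'m) opt_cat \<Rightarrow> bool" where
  "has_zeros C \<longleftrightarrow>
    (\<forall>A \<in> Ob C. \<forall>B \<in> Ob C. Zero C A B \<in> hom C A B) \<and>
    (\<forall>A B D f. f \<in> hom C B D \<longrightarrow> A \<in> Ob C \<longrightarrow> Cmp C f (Zero C A B) = Zero C A D) \<and>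
    (\<forall>A B D f. f \<in> hom C A B \<longrightarrow> D \<in> Ob C \<longrightarrow> Cmp C (Zero C B D) f = Zero C A D) \<and>
    (\<forall>A B D E f. f \<in> hom C A B \<longrightarrow> D \<in> Ob C \<longrightarrow> E \<in> Ob C \<longrightarrow>
        TensM C f (Zero C D E) = Zero C (TensO C A D) (TensO C B E) \<and>
        TensM C (Zero C D E) f = Zero C (TensO C D A) (TensO C E B))"

definition causal :: "('o,'m) opt_cat \<Rightarrow> 'm \<Rightarrow> bool" where
  "causal C f \<longleftrightarrow> Cmp C (Disc C (Cod C f)) f = Disc C (Dom C f)"

definition cocausal :: "('o,'m) opt_cat \<Rightarrow> 'm \<Rightarrow> bool" where
  "cocausal C f \<longleftrightarrow> Cmp C f (Mix C (Dom C f)) = Mix C (Cod C f)"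

definition pure :: "('o,'m) opt_cat \<Rightarrow> 'm \<Rightarrow> bool" where
  "pure C f \<longleftrightarrow> f = Zero C (Dom C f) (Cod C f) \<or>
    (\<forall>D \<in> Ob C. \<forall>g \<in> hom C (Dom C f) (TensO C (Cod C f) D).
       Cmp C (TensM C (Idm C (Cod C f)) (Disc C D)) g = f \<longrightarrow>
       (\<exists>\<rho> \<in> hom C (UnitO C) D. causal C \<rho> \<and> g = TensM C f \<rho>))"

definition normalisation :: "('o,'m) opt_cat \<Rightarrow> bool" where
  "normalisation C \<longleftrightarrow>
    (\<forall>A \<in> Ob C. \<forall>\<rho> \<in> hom C (UnitO C) A. \<rho> \<noteq> Zero C (UnitO C) A \<longrightarrow>
       (\<exists>!\<sigma>. \<sigma> \<in> hom C (UnitO C) A \<and> causal C \<sigma> \<and>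
             (\<exists>r \<in> hom C (UnitO C) (UnitO C). \<rho> = TensM C \<sigma> r)))"

definition normalise :: "('o,'m) opt_cat \<Rightarrow> 'm \<Rightarrow> 'm" where
  "normalise C \<rho> = (THE \<sigma>. \<sigma> \<in> hom C (UnitO C) (Cod C \<rho>) \<and> causal C \<sigma> \<and>
             (\<exists>r \<in> hom C (UnitO C) (UnitO C). \<rho> = TensM C \<sigma> r))"

definition dagger_causal :: "('o,'m) opt_cat \<Rightarrow> 'm \<Rightarrow> 'm" where
  "dagger_causal C \<psi> = (THE e. e \<in> hom C (Cod C \<psi>) (UnitO C) \<and> pure C e \<and> cocausal C e \<and>
                          Cmp C e \<psi> = Idm C (UnitO C))"

definition sharpness :: "('o,'m) opt_cat \<Rightarrow> bool" where
  "sharpness C \<longleftrightarrow>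
    (\<forall>A \<in> Ob C. \<forall>\<psi> \<in> hom C (UnitO C) A. causal C \<psi> \<longrightarrow> pure C \<psi> \<longrightarrow>
       (\<exists>!e. e \<in> hom C A (UnitO C) \<and> pure C e \<and> cocausal C e \<and> Cmp C e \<psi> = Idm C (UnitO C)) \<and>
       (\<forall>\<psi>' \<in> hom C (UnitO C) A. causal C \<psi>' \<longrightarrow> pure C \<psi>' \<longrightarrow>
          Cmp C (dagger_causal C \<psi>) \<psi>' = Idm C (UnitO C) \<longrightarrow> \<psi>' = \<psi>))"

definition bar :: "('o,'m) opt_cat \<Rightarrow> 'm \<Rightarrow> 'm" where
  "bar C \<psi> = (if \<psi> = Zero C (UnitO C) (Cod C \<psi>) then Zero C (Cod C \<psi>) (UnitO C)
              else TensM C (dagger_causal C (normalise C \<psi>)) (Cmp C (Disc C (Cod C \<psi>)) \<psi>))"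

definition pure_composition :: "('o,'m) opt_cat \<Rightarrow> bool" where
  "pure_composition C \<longleftrightarrow>
    (\<forall>A \<in> Ob C. \<forall>B \<in> Ob C. \<forall>\<psi> \<in> hom C (UnitO C) (TensO C A B). \<forall>\<phi> \<in> hom C (UnitO C) A.
       causal C \<psi> \<longrightarrow> pure C \<psi> \<longrightarrow> causal C \<phi> \<longrightarrow> pure C \<phi> \<longrightarrow>
       pure C (Cmp C (TensM C (bar C \<phi>) (Idm C B)) \<psi>) \<and>
       pure C (Cmp C (bar C \<psi>) (TensM C \<phi> (Idm C B))) \<and>
       bar C (Cmp C (TensM C (bar C \<phi>) (Idm C B)) \<psi>) = Cmp C (bar C \<psi>) (TensM C \<phi> (Idm C B)))"

definition double_purification :: "('o,'m) opt_cat \<Rightarrow> 'o \<Rightarrow> 'o \<Rightarrow> 'm \<Rightarrow> bool" where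
  "double_purification C A B \<omega> \<longleftrightarrow>
     \<omega> \<in> hom C (UnitO C) (TensO C A B) \<and> pure C \<omega> \<and>
     Cmp C (TensM C (Idm C A) (Disc C B)) \<omega> = Mix C A \<and>
     Cmp C (TensM C (Disc C A) (Idm C B)) \<omega> = Mix C B"

definition pre_duals :: "('o,'m) opt_cat \<Rightarrow> bool" where
  "pre_duals C \<longleftrightarrow>
    (\<forall>A \<in> Ob C. \<exists>B \<in> Ob C. \<exists>\<omega>. double_purification C A B \<omega> \<and>
       Cmp C (bar C \<omega>) (TensM C (Mix C A) (Idm C B)) = Disc C B \<and>
       Cmp C (bar C \<omega>) (TensM C (Idm C A) (Mix C B)) = Disc C A)"

end

theory Submission
  imports Defs
begin

locale omc =
  fixes C :: "('o, 'm) opt_cat"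
  assumes smc: "strict_smc C"
    and dsc: "has_discarding C"
    and mxd: "has_mixed C"
    and zrs: "has_zeros C"
    and nrm: "normalisation C"
    and shp: "sharpness C"
    and pcp: "pure_composition C"
begin

lemmas SM = smc[unfolded strict_smc_def]

abbreviation U where "U \<equiv> UnitO C"
abbreviation cmp (infixr "\<cdot>" 55) where "g \<cdot> f \<equiv> Cmp C g f"
abbreviation tm (infixl "\<otimes>" 65) where "f \<otimes> g \<equiv> TensM C f g"
abbreviation TO where "TO A B \<equiv> TensO C A B"
abbreviation Id where "Id A \<equiv> Idm C A"
abbreviation Z where "Z A B \<equiv> Zero C A B"
abbreviation Dc where "Dc A \<equiv> Disc C A"
abbreviation Mx where "Mx A \<equiv> Mix C A"
abbreviation Sw where "Sw A B \<equiv> Swap C A B"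

lemma homD: "f \<in> hom C A B \<Longrightarrow> f \<in> Ar C \<and> Dom C f = A \<and> Cod C f = B"
  by (simp add: hom_def)
lemma hom_ob: "f \<in> hom C A B \<Longrightarrow> A \<in> Ob C \<and> B \<in> Ob C"
  using SM[THEN conjunct1] unfolding hom_def by blast
lemma comp_hom: "f \<in> hom C A B \<Longrightarrow> g \<in> hom C B D \<Longrightarrow> g \<cdot> f \<in> hom C A D"
  using SM[THEN conjunct2, THEN conjunct2, THEN conjunct1] by blast
lemma tens_hom: "f \<in> hom C A B \<Longrightarrow> g \<in> hom C D E \<Longrightarrow> f \<otimes> g \<in> hom C (TO A D) (TO B E)"
  using SM[THEN conjunct2, THEN conjunct2, THEN conjunct2, THEN conjunct2, THEN conjunct2, THEN conjunct2, THEN conjunct2, THEN conjunct1] by blast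
lemma id_hom: "A \<in> Ob C \<Longrightarrow> Id A \<in> hom C A A"
  using SM[THEN conjunct2, THEN conjunct1] by blast
lemma idl: "f \<in> hom C A B \<Longrightarrow> Id B \<cdot> f = f"
  using SM[THEN conjunct2, THEN conjunct2, THEN conjunct2, THEN conjunct1] by blast
lemma idr: "f \<in> hom C A B \<Longrightarrow> f \<cdot> Id A = f"
  using SM[THEN conjunct2, THEN conjunct2, THEN conjunct2, THEN conjunct1] by blast
lemma assoc: "f \<in> hom C A B \<Longrightarrow> g \<in> hom C B D \<Longrightarrow> h \<in> hom C D E \<Longrightarrow> (h \<cdot> g) \<cdot> f = h \<cdot> (g \<cdot> f)"
  using SM[THEN conjunct2, THEN conjunct2, THEN conjunct2, THEN conjunct2, THEN conjunct1] by metis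
lemma inter: "f \<in> hom C A B \<Longrightarrow> g \<in> hom C B D \<Longrightarrow> f' \<in> hom C A' B' \<Longrightarrow> g' \<in> hom C B' D' \<Longrightarrow>
   (g \<otimes> g') \<cdot> (f \<otimes> f') = (g \<cdot> f) \<otimes> (g' \<cdot> f')"
  using SM[THEN conjunct2, THEN conjunct2, THEN conjunct2, THEN conjunct2, THEN conjunct2, THEN conjunct2, THEN conjunct2, THEN conjunct2, THEN conjunct1] by metis
lemma U_ob: "U \<in> Ob C"
  using SM[THEN conjunct2, THEN conjunct2, THEN conjunct2, THEN conjunct2, THEN conjunct2, THEN conjunct1] by blast
lemma TO_ob: "A \<in> Ob C \<Longrightarrow> B \<in> Ob C \<Longrightarrow> TO A B \<in> Ob C"
  using SM[THEN conjunct2, THEN conjunct2, THEN conjunct2, THEN conjunct2, THEN conjunct2, THEN conjunct2, THEN conjunct1] by blast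
lemma tens_id: "A \<in> Ob C \<Longrightarrow> B \<in> Ob C \<Longrightarrow> Id A \<otimes> Id B = Id (TO A B)"
  using SM[THEN conjunct2, THEN conjunct2, THEN conjunct2, THEN conjunct2, THEN conjunct2, THEN conjunct2, THEN conjunct2, THEN conjunct2, THEN conjunct2, THEN conjunct1] by blast
lemma TO_U1: "A \<in> Ob C \<Longrightarrow> TO U A = A"
  using SM[THEN conjunct2, THEN conjunct2, THEN conjunct2, THEN conjunct2, THEN conjunct2, THEN conjunct2, THEN conjunct2, THEN conjunct2, THEN conjunct2, THEN conjunct2, THEN conjunct2, THEN conjunct1] by blast
lemma TO_U2: "A \<in> Ob C \<Longrightarrow> TO A U = A"
  using SM[THEN conjunct2, THEN conjunct2, THEN conjunct2, THEN conjunct2, THEN conjunct2, THEN conjunct2, THEN conjunct2, THEN conjunct2, THEN conjunct2, THEN conjunct2, THEN conjunct2, THEN conjunct1] by blast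
lemma TM_assoc: "f \<in> Ar C \<Longrightarrow> g \<in> Ar C \<Longrightarrow> h \<in> Ar C \<Longrightarrow> f \<otimes> g \<otimes> h = f \<otimes> (g \<otimes> h)"
  using SM[THEN conjunct2, THEN conjunct2, THEN conjunct2, THEN conjunct2, THEN conjunct2, THEN conjunct2, THEN conjunct2, THEN conjunct2, THEN conjunct2, THEN conjunct2, THEN conjunct2, THEN conjunct2, THEN conjunct1] by blast
lemma TM_U1: "f \<in> Ar C \<Longrightarrow> Id U \<otimes> f = f"
  using SM[THEN conjunct2, THEN conjunct2, THEN conjunct2, THEN conjunct2, THEN conjunct2, THEN conjunct2, THEN conjunct2, THEN conjunct2, THEN conjunct2, THEN conjunct2, THEN conjunct2, THEN conjunct2, THEN conjunct2, THEN conjunct1] by blast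
lemma TM_U2: "f \<in> Ar C \<Longrightarrow> f \<otimes> Id U = f"
  using SM[THEN conjunct2, THEN conjunct2, THEN conjunct2, THEN conjunct2, THEN conjunct2, THEN conjunct2, THEN conjunct2, THEN conjunct2, THEN conjunct2, THEN conjunct2, THEN conjunct2, THEN conjunct2, THEN conjunct2, THEN conjunct1] by blast
lemma swap_hom: "A \<in> Ob C \<Longrightarrow> B \<in> Ob C \<Longrightarrow> Sw A B \<in> hom C (TO A B) (TO B A)"
  using SM[THEN conjunct2, THEN conjunct2, THEN conjunct2, THEN conjunct2, THEN conjunct2, THEN conjunct2, THEN conjunct2, THEN conjunct2, THEN conjunct2, THEN conjunct2, THEN conjunct2, THEN conjunct2, THEN conjunct2, THEN conjunct2, THEN conjunct1] by blast
lemma swap_inv: "A \<in> Ob C \<Longrightarrow> B \<in> Ob C \<Longrightarrow> Sw B A \<cdot> Sw A B = Id (TO A B)"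
  using SM[THEN conjunct2, THEN conjunct2, THEN conjunct2, THEN conjunct2, THEN conjunct2, THEN conjunct2, THEN conjunct2, THEN conjunct2, THEN conjunct2, THEN conjunct2, THEN conjunct2, THEN conjunct2, THEN conjunct2, THEN conjunct2, THEN conjunct2, THEN conjunct1] by blast
lemma swap_nat: "f \<in> hom C A B \<Longrightarrow> g \<in> hom C D E \<Longrightarrow> Sw B E \<cdot> (f \<otimes> g) = (g \<otimes> f) \<cdot> Sw A D"
  using SM[THEN conjunct2, THEN conjunct2, THEN conjunct2, THEN conjunct2, THEN conjunct2, THEN conjunct2, THEN conjunct2, THEN conjunct2, THEN conjunct2, THEN conjunct2, THEN conjunct2, THEN conjunct2, THEN conjunct2, THEN conjunct2, THEN conjunct2, THEN conjunct2, THEN conjunct1] by blast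
lemma swap_hex: "A \<in> Ob C \<Longrightarrow> B \<in> Ob C \<Longrightarrow> D \<in> Ob C \<Longrightarrow>
   Sw A (TO B D) = (Id B \<otimes> Sw A D) \<cdot> (Sw A B \<otimes> Id D)"
  using SM[THEN conjunct2, THEN conjunct2, THEN conjunct2, THEN conjunct2, THEN conjunct2, THEN conjunct2, THEN conjunct2, THEN conjunct2, THEN conjunct2, THEN conjunct2, THEN conjunct2, THEN conjunct2, THEN conjunct2, THEN conjunct2, THEN conjunct2, THEN conjunct2, THEN conjunct2] by blast
lemma disc_hom: "A \<in> Ob C \<Longrightarrow> Dc A \<in> hom C A U"
  using dsc unfolding has_discarding_def by blast
lemma disc_tens: "A \<in> Ob C \<Longrightarrow> B \<in> Ob C \<Longrightarrow> Dc (TO A B) = Dc A \<otimes> Dc B"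
  using dsc unfolding has_discarding_def by blast
lemma disc_U: "Dc U = Id U"
  using dsc unfolding has_discarding_def by blast
lemma mix_hom: "A \<in> Ob C \<Longrightarrow> Mx A \<in> hom C U A"
  using mxd unfolding has_mixed_def by blast
lemma mix_tens: "A \<in> Ob C \<Longrightarrow> B \<in> Ob C \<Longrightarrow> Mx (TO A B) = Mx A \<otimes> Mx B"
  using mxd unfolding has_mixed_def by blast
lemma mix_U: "Mx U = Id U"
  using mxd unfolding has_mixed_def by blast
lemma zero_hom: "A \<in> Ob C \<Longrightarrow> B \<in> Ob C \<Longrightarrow> Z A B \<in> hom C A B"
  using zrs unfolding has_zeros_def by blast
lemma zero_l: "f \<in> hom C B D \<Longrightarrow> A \<in> Ob C \<Longrightarrow> f \<cdot> Z A B = Z A D"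
  using zrs unfolding has_zeros_def by blast
lemma zero_r: "f \<in> hom C A B \<Longrightarrow> D \<in> Ob C \<Longrightarrow> Z B D \<cdot> f = Z A D"
  using zrs unfolding has_zeros_def by blast
lemma zero_t2: "f \<in> hom C A B \<Longrightarrow> D \<in> Ob C \<Longrightarrow> E \<in> Ob C \<Longrightarrow> Z D E \<otimes> f = Z (TO D A) (TO E B)"
  using zrs unfolding has_zeros_def by blast

lemma swap_AU: assumes "A \<in> Ob C" shows "Sw A U = Id A"
proof -
  have S: "Sw A U \<in> hom C A A" using swap_hom[OF assms U_ob] TO_U1 TO_U2 assms by simp
  have "Sw A (TO U U) = (Id U \<otimes> Sw A U) \<cdot> (Sw A U \<otimes> Id U)" using swap_hex assms U_ob by blast
  hence SS: "Sw A U = Sw A U \<cdot> Sw A U" using TM_U1 TM_U2 homD[OF S] TO_U1 U_ob by simp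
  have I: "Sw U A \<cdot> Sw A U = Id A" using swap_inv[OF assms U_ob] TO_U2 assms by simp
  have SU: "Sw U A \<in> hom C A A" using swap_hom[OF U_ob assms] TO_U1 TO_U2 assms by simp
  have "Sw A U = Id A \<cdot> Sw A U" using idl S by simp
  also have "\<dots> = Sw U A \<cdot> (Sw A U \<cdot> Sw A U)" using I assoc[OF S S SU] by simp
  also have "\<dots> = Id A" using SS I by simp
  finally show ?thesis .
qed

lemma swap_UA: assumes "A \<in> Ob C" shows "Sw U A = Id A"
proof -
  have SU: "Sw U A \<in> hom C A A" using swap_hom[OF U_ob assms] TO_U1 TO_U2 assms by simp
  have I: "Sw U A \<cdot> Sw A U = Id A" using swap_inv[OF assms U_ob] TO_U2 assms by simp
  thus ?thesis using swap_AU[OF assms] idr[OF SU] by simp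
qed


lemma ar_ob: "f \<in> Ar C \<Longrightarrow> Dom C f \<in> Ob C \<and> Cod C f \<in> Ob C"
  using SM[THEN conjunct1] by blast
lemma dom_ob[simp]: "f \<in> Ar C \<Longrightarrow> Dom C f \<in> Ob C" using ar_ob by blast
lemma cod_ob[simp]: "f \<in> Ar C \<Longrightarrow> Cod C f \<in> Ob C" using ar_ob by blast
lemma hom_iff: "f \<in> hom C A B \<longleftrightarrow> f \<in> Ar C \<and> Dom C f = A \<and> Cod C f = B"
  by (simp add: hom_def)

lemma comp_ar[simp]: "f \<in> Ar C \<Longrightarrow> g \<in> Ar C \<Longrightarrow> Dom C g = Cod C f \<Longrightarrow>
   g \<cdot> f \<in> Ar C \<and> Dom C (g \<cdot> f) = Dom C f \<and> Cod C (g \<cdot> f) = Cod C g"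
  using comp_hom[of f "Dom C f" "Cod C f" g "Cod C g"] by (simp add: hom_iff)
lemma comp_ar1[simp]: "f \<in> Ar C \<Longrightarrow> g \<in> Ar C \<Longrightarrow> Dom C g = Cod C f \<Longrightarrow> g \<cdot> f \<in> Ar C" by simp
lemma comp_dom[simp]: "f \<in> Ar C \<Longrightarrow> g \<in> Ar C \<Longrightarrow> Dom C g = Cod C f \<Longrightarrow> Dom C (g \<cdot> f) = Dom C f" by simp
lemma comp_cod[simp]: "f \<in> Ar C \<Longrightarrow> g \<in> Ar C \<Longrightarrow> Dom C g = Cod C f \<Longrightarrow> Cod C (g \<cdot> f) = Cod C g" by simp

lemma tens_ar: "f \<in> Ar C \<Longrightarrow> g \<in> Ar C \<Longrightarrow>
   f \<otimes> g \<in> Ar C \<and> Dom C (f \<otimes> g) = TO (Dom C f) (Dom C g) \<and> Cod C (f \<otimes> g) = TO (Cod C f) (Cod C g)"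
  using tens_hom[of f "Dom C f" "Cod C f" g "Dom C g" "Cod C g"] by (simp add: hom_iff)
lemma tens_ar1[simp]: "f \<in> Ar C \<Longrightarrow> g \<in> Ar C \<Longrightarrow> f \<otimes> g \<in> Ar C" using tens_ar by blast
lemma tens_dom[simp]: "f \<in> Ar C \<Longrightarrow> g \<in> Ar C \<Longrightarrow> Dom C (f \<otimes> g) = TO (Dom C f) (Dom C g)" using tens_ar by blast
lemma tens_cod[simp]: "f \<in> Ar C \<Longrightarrow> g \<in> Ar C \<Longrightarrow> Cod C (f \<otimes> g) = TO (Cod C f) (Cod C g)" using tens_ar by blast

lemma id_ar[simp]: "A \<in> Ob C \<Longrightarrow> Id A \<in> Ar C" "A \<in> Ob C \<Longrightarrow> Dom C (Id A) = A" "A \<in> Ob C \<Longrightarrow> Cod C (Id A) = A"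
  using id_hom by (auto simp: hom_iff)
lemma disc_ar[simp]: "A \<in> Ob C \<Longrightarrow> Dc A \<in> Ar C" "A \<in> Ob C \<Longrightarrow> Dom C (Dc A) = A" "A \<in> Ob C \<Longrightarrow> Cod C (Dc A) = U"
  using disc_hom by (auto simp: hom_iff)
lemma mix_ar[simp]: "A \<in> Ob C \<Longrightarrow> Mx A \<in> Ar C" "A \<in> Ob C \<Longrightarrow> Dom C (Mx A) = U" "A \<in> Ob C \<Longrightarrow> Cod C (Mx A) = A"
  using mix_hom by (auto simp: hom_iff)
lemma zero_ar[simp]: "A \<in> Ob C \<Longrightarrow> B \<in> Ob C \<Longrightarrow> Z A B \<in> Ar C"
  "A \<in> Ob C \<Longrightarrow> B \<in> Ob C \<Longrightarrow> Dom C (Z A B) = A" "A \<in> Ob C \<Longrightarrow> B \<in> Ob C \<Longrightarrow> Cod C (Z A B) = B"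
  using zero_hom by (auto simp: hom_iff)
lemma swap_ar[simp]: "A \<in> Ob C \<Longrightarrow> B \<in> Ob C \<Longrightarrow> Sw A B \<in> Ar C"
  "A \<in> Ob C \<Longrightarrow> B \<in> Ob C \<Longrightarrow> Dom C (Sw A B) = TO A B" "A \<in> Ob C \<Longrightarrow> B \<in> Ob C \<Longrightarrow> Cod C (Sw A B) = TO B A"
  using swap_hom by (auto simp: hom_iff)

lemma idl'[simp]: "f \<in> Ar C \<Longrightarrow> Cod C f = B \<Longrightarrow> Id B \<cdot> f = f"
  using idl[of f "Dom C f" B] by (simp add: hom_iff)
lemma idr'[simp]: "f \<in> Ar C \<Longrightarrow> Dom C f = A \<Longrightarrow> f \<cdot> Id A = f"
  using idr[of f A "Cod C f"] by (simp add: hom_iff)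
lemma assoc'[simp]: "f \<in> Ar C \<Longrightarrow> g \<in> Ar C \<Longrightarrow> h \<in> Ar C \<Longrightarrow> Dom C g = Cod C f \<Longrightarrow> Dom C h = Cod C g \<Longrightarrow>
   (h \<cdot> g) \<cdot> f = h \<cdot> (g \<cdot> f)"
  using assoc[of f "Dom C f" "Cod C f" g "Cod C g" h "Cod C h"] by (simp add: hom_iff)
lemma inter'[simp]: "f \<in> Ar C \<Longrightarrow> g \<in> Ar C \<Longrightarrow> f' \<in> Ar C \<Longrightarrow> g' \<in> Ar C \<Longrightarrow>
   Dom C g = Cod C f \<Longrightarrow> Dom C g' = Cod C f' \<Longrightarrow> (g \<otimes> g') \<cdot> (f \<otimes> f') = (g \<cdot> f) \<otimes> (g' \<cdot> f')"
  using inter[of f "Dom C f" "Cod C f" g "Cod C g" f' "Dom C f'" "Cod C f'" g' "Cod C g'"] by (simp add: hom_iff)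
lemma TO_U[simp]: "A \<in> Ob C \<Longrightarrow> TO U A = A" "A \<in> Ob C \<Longrightarrow> TO A U = A"
  using TO_U1 TO_U2 by auto
lemma TM_U[simp]: "f \<in> Ar C \<Longrightarrow> Id U \<otimes> f = f" "f \<in> Ar C \<Longrightarrow> f \<otimes> Id U = f"
  using TM_U1 TM_U2 by auto
lemma TM_assoc'[simp]: "f \<in> Ar C \<Longrightarrow> g \<in> Ar C \<Longrightarrow> h \<in> Ar C \<Longrightarrow> f \<otimes> g \<otimes> h = f \<otimes> (g \<otimes> h)"
  using TM_assoc by auto
lemma TO_assoc[simp]: "A \<in> Ob C \<Longrightarrow> B \<in> Ob C \<Longrightarrow> D \<in> Ob C \<Longrightarrow> TO (TO A B) D = TO A (TO B D)"
  using SM[THEN conjunct2, THEN conjunct2, THEN conjunct2, THEN conjunct2, THEN conjunct2, THEN conjunct2, THEN conjunct2, THEN conjunct2, THEN conjunct2, THEN conjunct2, THEN conjunct1] by blast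
lemma U_ob'[simp]: "U \<in> Ob C" using U_ob .
lemma TO_ob'[simp]: "A \<in> Ob C \<Longrightarrow> B \<in> Ob C \<Longrightarrow> TO A B \<in> Ob C" using TO_ob by blast
lemma disc_U'[simp]: "Dc U = Id U" using disc_U .
lemma mix_U'[simp]: "Mx U = Id U" using mix_U .
lemma swap_U[simp]: "A \<in> Ob C \<Longrightarrow> Sw A U = Id A" "A \<in> Ob C \<Longrightarrow> Sw U A = Id A"
  using swap_AU swap_UA by auto
lemma zero_l'[simp]: "f \<in> Ar C \<Longrightarrow> Dom C f = B \<Longrightarrow> A \<in> Ob C \<Longrightarrow> f \<cdot> Z A B = Z A (Cod C f)"
  using zero_l[of f B "Cod C f" A] by (simp add: hom_iff)
lemma zero_r'[simp]: "f \<in> Ar C \<Longrightarrow> Cod C f = B \<Longrightarrow> D \<in> Ob C \<Longrightarrow> Z B D \<cdot> f = Z (Dom C f) D"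
  using zero_r[of f "Dom C f" B D] by (simp add: hom_iff)
lemma zero_t2'[simp]: "f \<in> Ar C \<Longrightarrow> D \<in> Ob C \<Longrightarrow> E \<in> Ob C \<Longrightarrow> Z D E \<otimes> f = Z (TO D (Dom C f)) (TO E (Cod C f))"
  using zero_t2[of f "Dom C f" "Cod C f" D E] by (simp add: hom_iff)

lemma swap_nat': "f \<in> Ar C \<Longrightarrow> g \<in> Ar C \<Longrightarrow> Sw (Cod C f) (Cod C g) \<cdot> (f \<otimes> g) = (g \<otimes> f) \<cdot> Sw (Dom C f) (Dom C g)"
  using swap_nat[of f "Dom C f" "Cod C f" g "Dom C g" "Cod C g"] by (simp add: hom_iff)

lemma swap_st: "x \<in> hom C U A \<Longrightarrow> y \<in> hom C U B \<Longrightarrow> Sw A B \<cdot> (x \<otimes> y) = y \<otimes> x"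
  using swap_nat'[of x y] by (simp add: hom_iff)
lemma swap_ef: "e \<in> hom C A U \<Longrightarrow> f \<in> hom C B U \<Longrightarrow> (f \<otimes> e) \<cdot> Sw A B = e \<otimes> f"
  using swap_nat'[of e f] by (simp add: hom_iff)
lemma disc_swap: "A \<in> Ob C \<Longrightarrow> B \<in> Ob C \<Longrightarrow> Dc (TO B A) \<cdot> Sw A B = Dc (TO A B)"
  using swap_ef[of "Dc A" A "Dc B" B] disc_tens by (simp add: hom_iff)
lemma mix_swap: "A \<in> Ob C \<Longrightarrow> B \<in> Ob C \<Longrightarrow> Sw A B \<cdot> Mx (TO A B) = Mx (TO B A)"
  using swap_st[of "Mx A" A "Mx B" B] mix_tens by (simp add: hom_iff)
lemma scal_comm: "\<rho> \<in> hom C U D \<Longrightarrow> r \<in> hom C U U \<Longrightarrow> \<rho> \<otimes> r = r \<otimes> \<rho>"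
  using swap_st[of \<rho> D r U] hom_ob[of \<rho> U D] by (simp add: hom_iff)

lemma causal_st: "\<rho> \<in> hom C U D \<Longrightarrow> causal C \<rho> \<longleftrightarrow> Dc D \<cdot> \<rho> = Id U"
  by (simp add: causal_def hom_iff)
lemma cocausal_ef: "e \<in> hom C X U \<Longrightarrow> cocausal C e \<longleftrightarrow> e \<cdot> Mx X = Id U"
  by (simp add: cocausal_def hom_iff)
lemma pure_iff: "f \<in> hom C X Y \<Longrightarrow> pure C f \<longleftrightarrow> f = Z X Y \<or>
   (\<forall>D \<in> Ob C. \<forall>g \<in> hom C X (TO Y D). (Id Y \<otimes> Dc D) \<cdot> g = f \<longrightarrow>
       (\<exists>\<rho> \<in> hom C U D. causal C \<rho> \<and> g = f \<otimes> \<rho>))"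
  by (simp add: pure_def hom_iff)


lemma inter2[simp]: "f \<in> Ar C \<Longrightarrow> g \<in> Ar C \<Longrightarrow> f' \<in> Ar C \<Longrightarrow> g' \<in> Ar C \<Longrightarrow> x \<in> Ar C \<Longrightarrow>
   Dom C g = Cod C f \<Longrightarrow> Dom C g' = Cod C f' \<Longrightarrow> Cod C x = TO (Dom C f) (Dom C f') \<Longrightarrow>
   (g \<otimes> g') \<cdot> ((f \<otimes> f') \<cdot> x) = ((g \<cdot> f) \<otimes> (g' \<cdot> f')) \<cdot> x"
  using assoc'[of x "f \<otimes> f'" "g \<otimes> g'"] by simp
lemma tens_id'[simp]: "A \<in> Ob C \<Longrightarrow> B \<in> Ob C \<Longrightarrow> Id A \<otimes> Id B = Id (TO A B)"
  using tens_id by blast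

lemma pure_post:
  assumes f: "f \<in> hom C X Y" and p: "pure C f" and k: "k \<in> hom C Y W" and k': "k' \<in> hom C W Y"
    and kk: "k' \<cdot> k = Id Y" and kk2: "k \<cdot> k' = Id W"
  shows "pure C (k \<cdot> f)"
proof -
  have Ob: "X \<in> Ob C" "Y \<in> Ob C" "W \<in> Ob C" using hom_ob f k by auto
  note F = f[unfolded hom_iff] and K = k[unfolded hom_iff] and K' = k'[unfolded hom_iff]
  have kf: "k \<cdot> f \<in> hom C X W" using F K by (simp add: hom_iff)
  show ?thesis
  proof (cases "f = Z X Y")
    case True
    then have "k \<cdot> f = Z X W" using F K Ob by simp
    then show ?thesis using pure_iff[OF kf] by simp
  next
    case False
    then have P: "\<forall>D\<in>Ob C. \<forall>g\<in>hom C X (TO Y D). (Id Y \<otimes> Dc D) \<cdot> g = f \<longrightarrow> (\<exists>\<rho>\<in>hom C U D. causal C \<rho> \<and> g = f \<otimes> \<rho>)"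
      using pure_iff[OF f] p by blast
    have "\<forall>D\<in>Ob C. \<forall>g'\<in>hom C X (TO W D). (Id W \<otimes> Dc D) \<cdot> g' = k \<cdot> f \<longrightarrow> (\<exists>\<rho>\<in>hom C U D. causal C \<rho> \<and> g' = (k \<cdot> f) \<otimes> \<rho>)"
    proof (intro ballI impI)
      fix D g' assume D: "D \<in> Ob C" and g': "g' \<in> hom C X (TO W D)" and eq: "(Id W \<otimes> Dc D) \<cdot> g' = k \<cdot> f"
      note G' = g'[unfolded hom_iff]
      define g where "g = (k' \<otimes> Id D) \<cdot> g'"
      have g: "g \<in> hom C X (TO Y D)" using G' K' D Ob by (simp add: g_def hom_iff)
      have e1: "(k' \<otimes> Id U) \<cdot> (Id W \<otimes> Dc D) = k' \<otimes> Dc D" using K' D Ob by (simp del: TM_U)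
      have e2: "k' \<otimes> Id U = k'" using K' by simp
      have "(Id Y \<otimes> Dc D) \<cdot> g = (k' \<otimes> Dc D) \<cdot> g'" using G' K' D Ob by (simp add: g_def)
      also have "\<dots> = (k' \<cdot> (Id W \<otimes> Dc D)) \<cdot> g'" using e1 e2 by simp
      also have "\<dots> = k' \<cdot> ((Id W \<otimes> Dc D) \<cdot> g')" using G' K' D Ob by simp
      also have "\<dots> = k' \<cdot> (k \<cdot> f)" using eq by simp
      also have "\<dots> = (k' \<cdot> k) \<cdot> f" using F K K' by simp
      also have "\<dots> = f" using kk F by simp
      finally obtain \<rho> where \<rho>: "\<rho> \<in> hom C U D" "causal C \<rho>" "g = f \<otimes> \<rho>" using P D g by blast
      have "g' = (k \<otimes> Id D) \<cdot> g" using G' K K' D Ob by (simp add: g_def kk2)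
      also have "\<dots> = (k \<cdot> f) \<otimes> \<rho>" using \<rho>(1,3) F K D by (simp add: hom_iff)
      finally show "\<exists>\<rho>\<in>hom C U D. causal C \<rho> \<and> g' = (k \<cdot> f) \<otimes> \<rho>" using \<rho> by blast
    qed
    then show ?thesis using pure_iff[OF kf] by blast
  qed
qed

lemma pure_pre:
  assumes f: "f \<in> hom C X Y" and p: "pure C f" and h: "h \<in> hom C W X" and h': "h' \<in> hom C X W"
    and hh: "h' \<cdot> h = Id W" and hh2: "h \<cdot> h' = Id X"
  shows "pure C (f \<cdot> h)"
proof -
  have Ob: "X \<in> Ob C" "Y \<in> Ob C" "W \<in> Ob C" using hom_ob f h by auto
  note F = f[unfolded hom_iff] and H = h[unfolded hom_iff] and H' = h'[unfolded hom_iff]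
  have fh: "f \<cdot> h \<in> hom C W Y" using F H by (simp add: hom_iff)
  show ?thesis
  proof (cases "f = Z X Y")
    case True
    then have "f \<cdot> h = Z W Y" using H Ob by simp
    then show ?thesis using pure_iff[OF fh] by simp
  next
    case False
    then have P: "\<forall>D\<in>Ob C. \<forall>g\<in>hom C X (TO Y D). (Id Y \<otimes> Dc D) \<cdot> g = f \<longrightarrow> (\<exists>\<rho>\<in>hom C U D. causal C \<rho> \<and> g = f \<otimes> \<rho>)"
      using pure_iff[OF f] p by blast
    have "\<forall>D\<in>Ob C. \<forall>g'\<in>hom C W (TO Y D). (Id Y \<otimes> Dc D) \<cdot> g' = f \<cdot> h \<longrightarrow> (\<exists>\<rho>\<in>hom C U D. causal C \<rho> \<and> g' = (f \<cdot> h) \<otimes> \<rho>)"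
    proof (intro ballI impI)
      fix D g' assume D: "D \<in> Ob C" and g': "g' \<in> hom C W (TO Y D)" and eq: "(Id Y \<otimes> Dc D) \<cdot> g' = f \<cdot> h"
      note G' = g'[unfolded hom_iff]
      define g where "g = g' \<cdot> h'"
      have g: "g \<in> hom C X (TO Y D)" using G' H' D Ob by (simp add: g_def hom_iff)
      have "(Id Y \<otimes> Dc D) \<cdot> g = ((Id Y \<otimes> Dc D) \<cdot> g') \<cdot> h'" using G' H' D Ob by (simp add: g_def)
      also have "\<dots> = (f \<cdot> h) \<cdot> h'" using eq by simp
      also have "\<dots> = f \<cdot> (h \<cdot> h')" using F H H' by simp
      also have "\<dots> = f" using hh2 F by simp
      finally obtain \<rho> where \<rho>: "\<rho> \<in> hom C U D" "causal C \<rho>" "g = f \<otimes> \<rho>" using P D g by blast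
      have "g' = g' \<cdot> (h' \<cdot> h)" using hh G' by simp
      also have "\<dots> = g \<cdot> h" using G' H H' by (simp add: g_def)
      also have "\<dots> = (f \<otimes> \<rho>) \<cdot> (h \<otimes> Id U)" using \<rho>(3) H by simp
      also have "\<dots> = (f \<cdot> h) \<otimes> \<rho>" using \<rho>(1) F H by (simp add: hom_iff del: TM_U)
      finally show "\<exists>\<rho>\<in>hom C U D. causal C \<rho> \<and> g' = (f \<cdot> h) \<otimes> \<rho>" using \<rho> by blast
    qed
    then show ?thesis using pure_iff[OF fh] by blast
  qed
qed

lemma norm_ex: assumes \<chi>: "\<chi> \<in> hom C U X" and nz: "\<chi> \<noteq> Z U X"
  shows "\<exists>!\<sigma>. \<sigma> \<in> hom C U X \<and> causal C \<sigma> \<and> (\<exists>r\<in>hom C U U. \<chi> = \<sigma> \<otimes> r)"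
    and "normalise C \<chi> = (THE \<sigma>. \<sigma> \<in> hom C U X \<and> causal C \<sigma> \<and> (\<exists>r\<in>hom C U U. \<chi> = \<sigma> \<otimes> r))"
proof -
  have X: "X \<in> Ob C" using hom_ob \<chi> by blast
  show "\<exists>!\<sigma>. \<sigma> \<in> hom C U X \<and> causal C \<sigma> \<and> (\<exists>r\<in>hom C U U. \<chi> = \<sigma> \<otimes> r)"
    using nrm X \<chi> nz unfolding normalisation_def by blast
  show "normalise C \<chi> = (THE \<sigma>. \<sigma> \<in> hom C U X \<and> causal C \<sigma> \<and> (\<exists>r\<in>hom C U U. \<chi> = \<sigma> \<otimes> r))"
    using \<chi> by (simp add: normalise_def hom_iff)
qed

lemma norm_props: assumes \<chi>: "\<chi> \<in> hom C U X" and nz: "\<chi> \<noteq> Z U X"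
  shows "normalise C \<chi> \<in> hom C U X" "causal C (normalise C \<chi>)" "\<chi> = normalise C \<chi> \<otimes> (Dc X \<cdot> \<chi>)"
proof -
  have X: "X \<in> Ob C" using hom_ob \<chi> by blast
  obtain r where n: "normalise C \<chi> \<in> hom C U X" "causal C (normalise C \<chi>)" "r \<in> hom C U U" "\<chi> = normalise C \<chi> \<otimes> r"
    using theI'[OF norm_ex(1)[OF \<chi> nz]] norm_ex(2)[OF \<chi> nz] by auto
  define n where "n = normalise C \<chi>"
  note N = n(1)[folded n_def, unfolded hom_iff] and R = n(3)[unfolded hom_iff]
  have cn: "Dc X \<cdot> n = Id U" using n(1,2) causal_st n_def by blast
  have "Dc X \<cdot> \<chi> = (Dc X \<otimes> Id U) \<cdot> (n \<otimes> r)" using n(4) X n_def by simp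
  also have "\<dots> = (Dc X \<cdot> n) \<otimes> (Id U \<cdot> r)" by (rule inter') (use N R X in simp_all)
  also have "\<dots> = r" using cn R by simp
  finally have "Dc X \<cdot> \<chi> = r" .
  then show "normalise C \<chi> \<in> hom C U X" "causal C (normalise C \<chi>)" "\<chi> = normalise C \<chi> \<otimes> (Dc X \<cdot> \<chi>)"
    using n by auto
qed

lemma norm_uniq: assumes \<chi>: "\<chi> \<in> hom C U X" and nz: "\<chi> \<noteq> Z U X" and m: "m \<in> hom C U X" "causal C m"
   and r: "r \<in> hom C U U" and eq: "\<chi> = m \<otimes> r"
  shows "normalise C \<chi> = m"
  using norm_ex(2)[OF \<chi> nz] the1_equality[OF norm_ex(1)[OF \<chi> nz], of m] m r eq by auto

lemma dag_ex: assumes \<psi>: "\<psi> \<in> hom C U X" and c: "causal C \<psi>" and p: "pure C \<psi>"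
  shows "\<exists>!e. e \<in> hom C X U \<and> pure C e \<and> cocausal C e \<and> e \<cdot> \<psi> = Id U"
    and "dagger_causal C \<psi> = (THE e. e \<in> hom C X U \<and> pure C e \<and> cocausal C e \<and> e \<cdot> \<psi> = Id U)"
proof -
  have X: "X \<in> Ob C" using hom_ob \<psi> by blast
  show "\<exists>!e. e \<in> hom C X U \<and> pure C e \<and> cocausal C e \<and> e \<cdot> \<psi> = Id U"
    using shp X \<psi> c p unfolding sharpness_def by blast
  show "dagger_causal C \<psi> = (THE e. e \<in> hom C X U \<and> pure C e \<and> cocausal C e \<and> e \<cdot> \<psi> = Id U)"
    using \<psi> by (simp add: dagger_causal_def hom_iff)
qed

lemma dag_props: assumes \<psi>: "\<psi> \<in> hom C U X" and c: "causal C \<psi>" and p: "pure C \<psi>"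
  shows "dagger_causal C \<psi> \<in> hom C X U" "pure C (dagger_causal C \<psi>)" "cocausal C (dagger_causal C \<psi>)"
    "dagger_causal C \<psi> \<cdot> \<psi> = Id U"
  using theI'[OF dag_ex(1)[OF \<psi> c p]] dag_ex(2)[OF \<psi> c p] by auto

lemma dag_uniq: assumes \<psi>: "\<psi> \<in> hom C U X" and c: "causal C \<psi>" and p: "pure C \<psi>"
  and e: "e \<in> hom C X U" "pure C e" "cocausal C e" "e \<cdot> \<psi> = Id U"
  shows "dagger_causal C \<psi> = e"
  using dag_ex(2)[OF \<psi> c p] the1_equality[OF dag_ex(1)[OF \<psi> c p], of e] e by auto

lemma pure_norm: assumes \<chi>: "\<chi> \<in> hom C U X" and p: "pure C \<chi>" and nz: "\<chi> \<noteq> Z U X"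
  shows "pure C (normalise C \<chi>)"
proof -
  have X: "X \<in> Ob C" using hom_ob \<chi> by blast
  define n where "n = normalise C \<chi>"
  define r where "r = Dc X \<cdot> \<chi>"
  have n: "n \<in> hom C U X" "causal C n" "\<chi> = n \<otimes> r" using norm_props[OF \<chi> nz] n_def r_def by auto
  have r: "r \<in> hom C U U" using \<chi> X by (simp add: r_def hom_iff)
  note N = n(1)[unfolded hom_iff] and R = r[unfolded hom_iff]
  have cn: "Dc X \<cdot> n = Id U" using n causal_st by blast
  have P: "\<forall>D\<in>Ob C. \<forall>g\<in>hom C U (TO X D). (Id X \<otimes> Dc D) \<cdot> g = \<chi> \<longrightarrow> (\<exists>\<rho>\<in>hom C U D. causal C \<rho> \<and> g = \<chi> \<otimes> \<rho>)"
    using pure_iff[OF \<chi>] p nz by simp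
  have "\<forall>D\<in>Ob C. \<forall>g\<in>hom C U (TO X D). (Id X \<otimes> Dc D) \<cdot> g = n \<longrightarrow> (\<exists>\<rho>\<in>hom C U D. causal C \<rho> \<and> g = n \<otimes> \<rho>)"
  proof (intro ballI impI)
    fix D g assume D: "D \<in> Ob C" and g: "g \<in> hom C U (TO X D)" and eq: "(Id X \<otimes> Dc D) \<cdot> g = n"
    note G = g[unfolded hom_iff]
    have gr: "g \<otimes> r \<in> hom C U (TO X D)" using G R D X by (simp add: hom_iff)
    have "(Id X \<otimes> Dc D) \<cdot> (g \<otimes> r) = ((Id X \<otimes> Dc D) \<otimes> Id U) \<cdot> (g \<otimes> r)" using D X by simp
    also have "\<dots> = ((Id X \<otimes> Dc D) \<cdot> g) \<otimes> (Id U \<cdot> r)" by (rule inter') (use G R D X in simp_all)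
    also have "\<dots> = \<chi>" using eq n(3) R by simp
    finally have eqc: "(Id X \<otimes> Dc D) \<cdot> (g \<otimes> r) = \<chi>" .
    then obtain \<rho> where \<rho>: "\<rho> \<in> hom C U D" "causal C \<rho>" "g \<otimes> r = \<chi> \<otimes> \<rho>" using P D gr by blast
    note RH = \<rho>(1)[unfolded hom_iff]
    have "\<chi> \<otimes> \<rho> = (n \<otimes> \<rho>) \<otimes> r" using scal_comm[OF \<rho>(1) r] n(3) N R RH by simp
    hence e1: "g \<otimes> r = (n \<otimes> \<rho>) \<otimes> r" using \<rho>(3) by simp
    have gnz: "g \<otimes> r \<noteq> Z U (TO X D)"
    proof
      assume "g \<otimes> r = Z U (TO X D)"
      hence "(Id X \<otimes> Dc D) \<cdot> (g \<otimes> r) = Z U X" using D X by simp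
      thus False using eqc nz by simp
    qed
    have cg0: "(Dc X \<otimes> Id U) \<cdot> ((Id X \<otimes> Dc D) \<cdot> g) = (Dc X \<otimes> Dc D) \<cdot> g" using G D X by (simp del: TM_U)
    have cg: "causal C g" unfolding causal_st[OF g] using cg0 eq cn disc_tens[OF X D] X by simp
    have nrh: "n \<otimes> \<rho> \<in> hom C U (TO X D)" using N RH by (simp add: hom_iff)
    have "Dc (TO X D) \<cdot> (n \<otimes> \<rho>) = (Dc X \<cdot> n) \<otimes> (Dc D \<cdot> \<rho>)" using disc_tens[OF X D] N RH X D by simp
    also have "\<dots> = Id U" using cn \<rho>(2) causal_st[OF \<rho>(1)] by simp
    finally have cnr: "causal C (n \<otimes> \<rho>)" using causal_st[OF nrh] by simp
    have "normalise C (g \<otimes> r) = g" using norm_uniq[OF gr gnz g cg r] by simp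
    moreover have "normalise C (g \<otimes> r) = n \<otimes> \<rho>" using norm_uniq[OF gr gnz nrh cnr r e1] .
    ultimately show "\<exists>\<rho>\<in>hom C U D. causal C \<rho> \<and> g = n \<otimes> \<rho>" using \<rho> by auto
  qed
  then show ?thesis unfolding n_def[symmetric] using pure_iff[OF n(1)] by blast
qed

lemma bar_zero: "X \<in> Ob C \<Longrightarrow> bar C (Z U X) = Z X U"
  by (simp add: bar_def)
lemma bar_nz: "\<chi> \<in> hom C U X \<Longrightarrow> \<chi> \<noteq> Z U X \<Longrightarrow> bar C \<chi> = dagger_causal C (normalise C \<chi>) \<otimes> (Dc X \<cdot> \<chi>)"
  by (simp add: bar_def hom_iff)

lemma norm_nz: assumes \<chi>: "\<chi> \<in> hom C U X" and nz: "\<chi> \<noteq> Z U X" shows "normalise C \<chi> \<noteq> Z U X"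
proof
  assume a: "normalise C \<chi> = Z U X"
  have X: "X \<in> Ob C" using hom_ob \<chi> by blast
  have "\<chi> = Z U X \<otimes> (Dc X \<cdot> \<chi>)" using norm_props(3)[OF \<chi> nz] a by simp
  also have "\<dots> = Z U X" using \<chi> X by (simp add: hom_iff)
  finally show False using nz by simp
qed

lemma bar_hom: assumes \<chi>: "\<chi> \<in> hom C U X" and p: "pure C \<chi>" shows "bar C \<chi> \<in> hom C X U"
proof (cases "\<chi> = Z U X")
  case True
  have X: "X \<in> Ob C" using hom_ob \<chi> by blast
  then show ?thesis using True bar_zero zero_hom by simp
next
  case False
  have X: "X \<in> Ob C" using hom_ob \<chi> by blast
  have d: "dagger_causal C (normalise C \<chi>) \<in> hom C X U"
    using dag_props(1)[OF norm_props(1,2)[OF \<chi> False] pure_norm[OF \<chi> p False]] .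
  show ?thesis using bar_nz[OF \<chi> False] d \<chi> X by (simp add: hom_iff)
qed

lemma norm_causal: assumes \<psi>: "\<psi> \<in> hom C U X" and c: "causal C \<psi>" and nz: "\<psi> \<noteq> Z U X"
  shows "normalise C \<psi> = \<psi>"
  using norm_uniq[OF \<psi> nz \<psi> c, of "Id U"] \<psi> by (simp add: hom_iff)

lemma bar_causal: assumes \<psi>: "\<psi> \<in> hom C U X" and c: "causal C \<psi>" and p: "pure C \<psi>" and nz: "\<psi> \<noteq> Z U X"
  shows "bar C \<psi> = dagger_causal C \<psi>"
proof -
  have "Dc X \<cdot> \<psi> = Id U" using causal_st[OF \<psi>] c by simp
  moreover have "dagger_causal C \<psi> \<in> Ar C" using dag_props(1)[OF \<psi> c p] by (simp add: hom_iff)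
  ultimately show ?thesis using bar_nz[OF \<psi> nz] norm_causal[OF \<psi> c nz] by simp
qed

lemma BM: assumes \<chi>: "\<chi> \<in> hom C U X" and p: "pure C \<chi>" shows "bar C \<chi> \<cdot> Mx X = Dc X \<cdot> \<chi>"
proof (cases "\<chi> = Z U X")
  case True
  have X: "X \<in> Ob C" using hom_ob \<chi> by blast
  then show ?thesis using True bar_zero by simp
next
  case False
  have X: "X \<in> Ob C" using hom_ob \<chi> by blast
  define d where "d = dagger_causal C (normalise C \<chi>)"
  define r where "r = Dc X \<cdot> \<chi>"
  have d: "d \<in> hom C X U" "cocausal C d"
    using dag_props(1,3)[OF norm_props(1,2)[OF \<chi> False] pure_norm[OF \<chi> p False]] d_def by auto
  have dm: "d \<cdot> Mx X = Id U" using cocausal_ef[OF d(1)] d(2) by simp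
  note D = d(1)[unfolded hom_iff]
  have R: "r \<in> Ar C" "Dom C r = U" "Cod C r = U" using \<chi> X by (simp_all add: r_def hom_iff)
  have "bar C \<chi> \<cdot> Mx X = (d \<otimes> r) \<cdot> (Mx X \<otimes> Id U)" using bar_nz[OF \<chi> False] X d_def r_def by simp
  also have "\<dots> = (d \<cdot> Mx X) \<otimes> (r \<cdot> Id U)" by (rule inter') (use D R X in simp_all)
  also have "\<dots> = r" using dm R by simp
  finally show ?thesis using r_def by simp
qed

lemma PC': assumes A: "A \<in> Ob C" and B: "B \<in> Ob C" and \<omega>: "\<omega> \<in> hom C U (TO A B)" and p\<omega>: "pure C \<omega>"
  and \<phi>: "\<phi> \<in> hom C U A" and c\<phi>: "causal C \<phi>" and p\<phi>: "pure C \<phi>"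
  shows "bar C \<omega> \<cdot> ((\<phi> \<otimes> Id B) \<cdot> Mx B) = bar C \<phi> \<cdot> ((Id A \<otimes> Dc B) \<cdot> \<omega>)"
proof -
  have b\<phi>: "bar C \<phi> \<in> hom C A U" using bar_hom[OF \<phi> p\<phi>] .
  note BP = b\<phi>[unfolded hom_iff] and PH = \<phi>[unfolded hom_iff] and OM = \<omega>[unfolded hom_iff]
  show ?thesis
  proof (cases "\<omega> = Z U (TO A B)")
    case True
    then show ?thesis using bar_zero[of "TO A B"] A B BP PH by simp
  next
    case False
    define n where "n = normalise C \<omega>"
    define r where "r = Dc (TO A B) \<cdot> \<omega>"
    have n: "n \<in> hom C U (TO A B)" "causal C n" "\<omega> = n \<otimes> r" "pure C n" "n \<noteq> Z U (TO A B)"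
      using norm_props[OF \<omega> False] pure_norm[OF \<omega> p\<omega> False] norm_nz[OF \<omega> False] n_def r_def by auto
    have R: "r \<in> Ar C" "Dom C r = U" "Cod C r = U" using \<omega> A B by (simp_all add: r_def hom_iff)
    note N = n(1)[unfolded hom_iff]
    have bn: "bar C n \<in> hom C (TO A B) U" using bar_hom[OF n(1) n(4)] .
    note BN = bn[unfolded hom_iff]
    have bo: "bar C \<omega> = bar C n \<otimes> r"
      using bar_nz[OF \<omega> False] bar_causal[OF n(1,2,4,5)] n_def r_def by simp
    have pc: "pure C ((bar C \<phi> \<otimes> Id B) \<cdot> n) \<and> bar C ((bar C \<phi> \<otimes> Id B) \<cdot> n) = bar C n \<cdot> (\<phi> \<otimes> Id B)"
      using pcp A B n(1,2,4) \<phi> c\<phi> p\<phi> unfolding pure_composition_def by blast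
    define \<chi> where "\<chi> = (bar C \<phi> \<otimes> Id B) \<cdot> n"
    have \<chi>: "\<chi> \<in> hom C U B" using BP N A B by (simp add: \<chi>_def hom_iff)
    have l1: "bar C \<omega> \<cdot> ((\<phi> \<otimes> Id B) \<cdot> Mx B) = (bar C n \<otimes> r) \<cdot> (((\<phi> \<otimes> Id B) \<cdot> Mx B) \<otimes> Id U)"
      using bo PH A B by simp
    have l2: "(bar C n \<otimes> r) \<cdot> (((\<phi> \<otimes> Id B) \<cdot> Mx B) \<otimes> Id U) = (bar C n \<cdot> ((\<phi> \<otimes> Id B) \<cdot> Mx B)) \<otimes> r"
      using BN R PH A B by (simp del: TM_U TM_assoc')
    have l3: "bar C n \<cdot> ((\<phi> \<otimes> Id B) \<cdot> Mx B) = bar C \<chi> \<cdot> Mx B"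
      using pc BN PH A B by (simp add: \<chi>_def)
    have l4: "bar C \<chi> \<cdot> Mx B = Dc B \<cdot> \<chi>" using BM[OF \<chi>] pc \<chi>_def by simp
    have d1: "(Id U \<otimes> Dc B) \<cdot> ((bar C \<phi> \<otimes> Id B) \<cdot> n) = (bar C \<phi> \<otimes> Id U) \<cdot> ((Id A \<otimes> Dc B) \<cdot> n)"
      using BP N A B by (simp del: TM_U TM_assoc')
    have l5: "Dc B \<cdot> \<chi> = bar C \<phi> \<cdot> ((Id A \<otimes> Dc B) \<cdot> n)"
      using d1 BP N A B by (simp add: \<chi>_def)
    have h1: "(bar C \<phi> \<otimes> Id U) \<cdot> (((Id A \<otimes> Dc B) \<otimes> Id U) \<cdot> (n \<otimes> r)) = (bar C \<phi> \<cdot> ((Id A \<otimes> Dc B) \<cdot> n)) \<otimes> r"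
      using BP N R A B by (simp del: TM_U TM_assoc')
    have h2: "(bar C \<phi> \<otimes> Id U) \<cdot> (((Id A \<otimes> Dc B) \<otimes> Id U) \<cdot> (n \<otimes> r)) = bar C \<phi> \<cdot> ((Id A \<otimes> Dc B) \<cdot> \<omega>)"
      using BP N R A B n(3) by simp
    show ?thesis using l1 l2 l3 l4 l5 h1 h2 by simp
  qed
qed

lemma SW: assumes A: "A \<in> Ob C" and B: "B \<in> Ob C" and \<omega>: "\<omega> \<in> hom C U (TO A B)" and p\<omega>: "pure C \<omega>"
  shows "pure C (Sw A B \<cdot> \<omega>)" "bar C (Sw A B \<cdot> \<omega>) = bar C \<omega> \<cdot> Sw B A"
proof -
  have S: "Sw A B \<in> hom C (TO A B) (TO B A)" and S': "Sw B A \<in> hom C (TO B A) (TO A B)"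
    using swap_hom A B by auto
  have i1: "Sw B A \<cdot> Sw A B = Id (TO A B)" and i2: "Sw A B \<cdot> Sw B A = Id (TO B A)"
    using swap_inv A B by auto
  note OM = \<omega>[unfolded hom_iff]
  show pw: "pure C (Sw A B \<cdot> \<omega>)" using pure_post[OF \<omega> p\<omega> S S' i1 i2] .
  have w': "Sw A B \<cdot> \<omega> \<in> hom C U (TO B A)" using OM A B by (simp add: hom_iff)
  show "bar C (Sw A B \<cdot> \<omega>) = bar C \<omega> \<cdot> Sw B A"
  proof (cases "\<omega> = Z U (TO A B)")
    case True
    then show ?thesis using bar_zero A B by simp
  next
    case False
    have bk: "Sw B A \<cdot> (Sw A B \<cdot> \<omega>) = \<omega>"
    proof -
      have "Sw B A \<cdot> (Sw A B \<cdot> \<omega>) = (Sw B A \<cdot> Sw A B) \<cdot> \<omega>" using OM A B by simp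
      then show ?thesis using i1 OM A B by simp
    qed
    have nz': "Sw A B \<cdot> \<omega> \<noteq> Z U (TO B A)"
    proof
      assume "Sw A B \<cdot> \<omega> = Z U (TO B A)"
      hence "\<omega> = Sw B A \<cdot> Z U (TO B A)" using bk by simp
      also have "\<dots> = Z U (TO A B)" using A B by simp
      finally show False using False by simp
    qed
    define n where "n = normalise C \<omega>"
    define r where "r = Dc (TO A B) \<cdot> \<omega>"
    have n: "n \<in> hom C U (TO A B)" "causal C n" "\<omega> = n \<otimes> r" "pure C n" "n \<noteq> Z U (TO A B)"
      using norm_props[OF \<omega> False] pure_norm[OF \<omega> p\<omega> False] norm_nz[OF \<omega> False] n_def r_def by auto
    have R: "r \<in> Ar C" "Dom C r = U" "Cod C r = U" using \<omega> A B by (simp_all add: r_def hom_iff)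
    have Rh: "r \<in> hom C U U" using R by (simp add: hom_iff)
    note N = n(1)[unfolded hom_iff]
    define m where "m = Sw A B \<cdot> n"
    have m: "m \<in> hom C U (TO B A)" using N A B by (simp add: m_def hom_iff)
    have "Dc (TO B A) \<cdot> m = (Dc (TO B A) \<cdot> Sw A B) \<cdot> n" using N A B by (simp add: m_def)
    also have "\<dots> = Id U" using disc_swap[OF A B] n(2) causal_st[OF n(1)] by simp
    finally have cm: "causal C m" using causal_st[OF m] by simp
    have pm: "pure C m" using pure_post[OF n(1) n(4) S S' i1 i2] m_def by simp
    have h1: "(Sw A B \<otimes> Id U) \<cdot> (n \<otimes> r) = (Sw A B \<cdot> n) \<otimes> (Id U \<cdot> r)"
      by (rule inter') (use N R A B in simp_all)
    have wm: "Sw A B \<cdot> \<omega> = m \<otimes> r" using h1 n(3) A B R by (simp add: m_def)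
    have nm: "normalise C (Sw A B \<cdot> \<omega>) = m" using norm_uniq[OF w' nz' m cm Rh wm] .
    have r': "Dc (TO B A) \<cdot> (Sw A B \<cdot> \<omega>) = r"
    proof -
      have "Dc (TO B A) \<cdot> (Sw A B \<cdot> \<omega>) = (Dc (TO B A) \<cdot> Sw A B) \<cdot> \<omega>" using OM A B by simp
      then show ?thesis using disc_swap[OF A B] r_def by simp
    qed
    define dn where "dn = dagger_causal C n"
    have dn: "dn \<in> hom C (TO A B) U" "pure C dn" "cocausal C dn" "dn \<cdot> n = Id U"
      using dag_props[OF n(1,2,4)] dn_def by auto
    note DN = dn(1)[unfolded hom_iff]
    have e1: "dn \<cdot> Sw B A \<in> hom C (TO B A) U" using DN A B by (simp add: hom_iff)
    have e2: "pure C (dn \<cdot> Sw B A)" using pure_pre[OF dn(1,2) S' S i2 i1] .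
    have "(dn \<cdot> Sw B A) \<cdot> Mx (TO B A) = dn \<cdot> (Sw B A \<cdot> Mx (TO B A))" using DN A B by simp
    also have "\<dots> = Id U" using mix_swap[OF B A] dn(3) cocausal_ef[OF dn(1)] by simp
    finally have e3: "cocausal C (dn \<cdot> Sw B A)" using cocausal_ef[OF e1] by simp
    have "(dn \<cdot> Sw B A) \<cdot> m = dn \<cdot> ((Sw B A \<cdot> Sw A B) \<cdot> n)" using DN N A B by (simp add: m_def)
    also have "\<dots> = Id U" using i1 dn(4) N by simp
    finally have e4: "(dn \<cdot> Sw B A) \<cdot> m = Id U" .
    have dm: "dagger_causal C m = dn \<cdot> Sw B A" using dag_uniq[OF m cm pm e1 e2 e3 e4] .
    have "bar C (Sw A B \<cdot> \<omega>) = (dn \<cdot> Sw B A) \<otimes> r" using bar_nz[OF w' nz'] nm r' dm by simp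
    also have "\<dots> = (dn \<otimes> r) \<cdot> (Sw B A \<otimes> Id U)"
    proof -
      have "(dn \<otimes> r) \<cdot> (Sw B A \<otimes> Id U) = (dn \<cdot> Sw B A) \<otimes> (r \<cdot> Id U)"
        by (rule inter') (use DN R A B in simp_all)
      then show ?thesis using R by simp
    qed
    also have "\<dots> = bar C \<omega> \<cdot> Sw B A"
      using bar_nz[OF \<omega> False] A B n_def r_def dn_def by simp
    finally show ?thesis .
  qed
qed
end

theorem mainTheorem7:
  fixes C :: "('o, 'm) opt_cat"
  assumes "strict_smc C"
    and "has_discarding C"
    and "has_mixed C"
    and "has_zeros C"
    and "normalisation C"
    and "sharpness C"
    and "pure_composition C"
    and "\<forall>A \<in> Ob C. \<forall>e \<in> hom C A (UnitO C).
           (\<forall>\<psi> \<in> hom C (UnitO C) A. causal C \<psi> \<longrightarrow> pure C \<psi> \<longrightarrow> Cmp C e \<psi> = Idm C (UnitO C))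
           \<longleftrightarrow> e = Disc C A"
  shows "pre_duals C \<longleftrightarrow> (\<forall>A \<in> Ob C. \<exists>B \<in> Ob C. \<exists>\<omega>. double_purification C A B \<omega>)"
proof -
  interpret omc C by (rule omc.intro) (rule assms)+
  note H8 = assms(8)
  show ?thesis
  proof
    assume "pre_duals C"
    then show "\<forall>A \<in> Ob C. \<exists>B \<in> Ob C. \<exists>\<omega>. double_purification C A B \<omega>"
      unfolding pre_duals_def by blast
  next
    assume H: "\<forall>A \<in> Ob C. \<exists>B \<in> Ob C. \<exists>\<omega>. double_purification C A B \<omega>"
    show "pre_duals C" unfolding pre_duals_def
    proof
      fix A assume A: "A \<in> Ob C"
      obtain B \<omega> where B: "B \<in> Ob C" and dp: "double_purification C A B \<omega>" using H A by blast
      have \<omega>: "\<omega> \<in> hom C U (TO A B)" and p\<omega>: "pure C \<omega>" and m1: "(Id A \<otimes> Dc B) \<cdot> \<omega> = Mx A"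
        and m2: "(Dc A \<otimes> Id B) \<cdot> \<omega> = Mx B"
        using dp unfolding double_purification_def by auto
      note OM = \<omega>[unfolded hom_iff]
      have b\<omega>: "bar C \<omega> \<in> hom C (TO A B) U" using bar_hom[OF \<omega> p\<omega>] .
      note BO = b\<omega>[unfolded hom_iff]
      have c2: "bar C \<omega> \<cdot> (Id A \<otimes> Mx B) = Dc A"
      proof -
        have e: "bar C \<omega> \<cdot> (Id A \<otimes> Mx B) \<in> hom C A U" using BO A B by (simp add: hom_iff)
        have "\<forall>\<psi> \<in> hom C U A. causal C \<psi> \<longrightarrow> pure C \<psi> \<longrightarrow> (bar C \<omega> \<cdot> (Id A \<otimes> Mx B)) \<cdot> \<psi> = Id U"
        proof (intro ballI impI)
          fix \<phi> assume \<phi>: "\<phi> \<in> hom C U A" and c\<phi>: "causal C \<phi>" and p\<phi>: "pure C \<phi>"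
          note PH = \<phi>[unfolded hom_iff]
          have a1: "(Id A \<otimes> Mx B) \<cdot> (\<phi> \<otimes> Id U) = \<phi> \<otimes> Mx B" using PH A B by (simp del: TM_U TM_assoc')
          have a2: "(\<phi> \<otimes> Id B) \<cdot> (Id U \<otimes> Mx B) = \<phi> \<otimes> Mx B" using PH A B by (simp del: TM_U TM_assoc')
          have "(bar C \<omega> \<cdot> (Id A \<otimes> Mx B)) \<cdot> \<phi> = bar C \<omega> \<cdot> ((\<phi> \<otimes> Id B) \<cdot> Mx B)"
            using a1 a2 BO PH A B by simp
          also have "\<dots> = bar C \<phi> \<cdot> ((Id A \<otimes> Dc B) \<cdot> \<omega>)" using PC'[OF A B \<omega> p\<omega> \<phi> c\<phi> p\<phi>] .
          also have "\<dots> = Dc A \<cdot> \<phi>" using m1 BM[OF \<phi> p\<phi>] by simp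
          also have "\<dots> = Id U" using causal_st[OF \<phi>] c\<phi> by simp
          finally show "(bar C \<omega> \<cdot> (Id A \<otimes> Mx B)) \<cdot> \<phi> = Id U" .
        qed
        then show ?thesis using H8 A e by blast
      qed
      have c1: "bar C \<omega> \<cdot> (Mx A \<otimes> Id B) = Dc B"
      proof -
        have e: "bar C \<omega> \<cdot> (Mx A \<otimes> Id B) \<in> hom C B U" using BO A B by (simp add: hom_iff)
        define \<omega>' where "\<omega>' = Sw A B \<cdot> \<omega>"
        have w': "\<omega>' \<in> hom C U (TO B A)" using OM A B by (simp add: \<omega>'_def hom_iff)
        have pw': "pure C \<omega>'" and bw': "bar C \<omega>' = bar C \<omega> \<cdot> Sw B A"
          using SW[OF A B \<omega> p\<omega>] \<omega>'_def by auto
        have sn: "Dc A \<otimes> Id B = (Id B \<otimes> Dc A) \<cdot> Sw A B" using swap_nat'[of "Dc A" "Id B"] A B by simp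
        have m2': "(Id B \<otimes> Dc A) \<cdot> \<omega>' = Mx B"
        proof -
          have "(Id B \<otimes> Dc A) \<cdot> \<omega>' = ((Id B \<otimes> Dc A) \<cdot> Sw A B) \<cdot> \<omega>" using OM A B by (simp add: \<omega>'_def)
          then show ?thesis using sn m2 by simp
        qed
        have "\<forall>\<psi> \<in> hom C U B. causal C \<psi> \<longrightarrow> pure C \<psi> \<longrightarrow> (bar C \<omega> \<cdot> (Mx A \<otimes> Id B)) \<cdot> \<psi> = Id U"
        proof (intro ballI impI)
          fix \<psi> assume \<psi>: "\<psi> \<in> hom C U B" and c\<psi>: "causal C \<psi>" and p\<psi>: "pure C \<psi>"
          note PS = \<psi>[unfolded hom_iff]
          have a1: "(Mx A \<otimes> Id B) \<cdot> (Id U \<otimes> \<psi>) = Mx A \<otimes> \<psi>" using PS A B by (simp del: TM_U TM_assoc')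
          have a2: "(\<psi> \<otimes> Id A) \<cdot> (Id U \<otimes> Mx A) = \<psi> \<otimes> Mx A" using PS A B by (simp del: TM_U TM_assoc')
          have a3: "Sw B A \<cdot> (\<psi> \<otimes> Mx A) = Mx A \<otimes> \<psi>" using swap_st[OF \<psi> mix_hom[OF A]] .
          have "(bar C \<omega> \<cdot> (Mx A \<otimes> Id B)) \<cdot> \<psi> = bar C \<omega> \<cdot> (Mx A \<otimes> \<psi>)"
            using a1 BO PS A B by simp
          also have "\<dots> = (bar C \<omega> \<cdot> Sw B A) \<cdot> (\<psi> \<otimes> Mx A)" using a3 BO PS A B by simp
          also have "\<dots> = bar C \<omega>' \<cdot> ((\<psi> \<otimes> Id A) \<cdot> Mx A)" using bw' a2 PS A B by simp
          also have "\<dots> = bar C \<psi> \<cdot> ((Id B \<otimes> Dc A) \<cdot> \<omega>')" using PC'[OF B A w' pw' \<psi> c\<psi> p\<psi>] .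
          also have "\<dots> = Dc B \<cdot> \<psi>" using m2' BM[OF \<psi> p\<psi>] by simp
          also have "\<dots> = Id U" using causal_st[OF \<psi>] c\<psi> by simp
          finally show "(bar C \<omega> \<cdot> (Mx A \<otimes> Id B)) \<cdot> \<psi> = Id U" .
        qed
        then show ?thesis using H8 B e by blast
      qed
      show "\<exists>B\<in>Ob C. \<exists>\<omega>. double_purification C A B \<omega> \<and>
          Cmp C (bar C \<omega>) (TensM C (Mix C A) (Idm C B)) = Disc C B \<and>
          Cmp C (bar C \<omega>) (TensM C (Idm C A) (Mix C B)) = Disc C A"
        using B dp c1 c2 by blast
    qed
  qed
qed

end
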